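(* Let $1/4\le\beta<1/3$ and let $G$ be a graph of order $n$ with minimum degree $(1-\beta)n$. Then for every triangle $T\in\mathcal{K}_3$, $$\widetilde D(T)\ \ge\ \left(1-\frac{2}{29-75\beta}\right)\frac{4\beta-1}{1-2\beta}D_+(T)-(1-2\beta)\sum_{e\in\mathcal{K}_2(T)}\frac{D_+(e)}{D_+(e)+\beta}.$$ Moreover, if equality holds then $T$ is not heavy and $d(v)=(1-\beta)n$ for all $v\in T$.
   Context: All graphs are finite and simple. For a graph $G$, $\mathcal{K}_t$ is the set of $t$-cliques (identified with vertex sets); $\mathcal{K}_t(S)$ is the set of $t$-cliques contained in a clique $S$. The degree $d(T)$ of a clique $T$ is the number of cliques with one more vertex containing $T$, and $D(T)=d(T)/n$. Here $p=\lceil\beta^{-1}\rceil-1=3$. For $T\in\mathcal{K}_t$, $1\le t\le 4$, $D_-(T)=\min\{D(T),(4-t)\beta\}$, $D_+(T)=D(T)-D_-(T)$, and $T$ is heavy if $D_+(T)>0$. For a triangle $T$, $\widetilde D(T)=\sum_{e\in\mathcal{K}_2(T)}D_-(e)-\big(2-3\beta+D_-(T)\big)$. *)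

theory Defs
  imports Complex_Main
begin

definition sgraph :: "'a set \<Rightarrow> ('a \<Rightarrow> 'a \<Rightarrow> bool) \<Rightarrow> bool" where
  "sgraph V adj \<longleftrightarrow> finite V \<and> (\<forall>u v. adj u v \<longrightarrow> u \<in> V \<and> v \<in> V)
     \<and> (\<forall>u v. adj u v \<longrightarrow> adj v u) \<and> (\<forall>v. \<not> adj v v)"

definition vdeg :: "'a set \<Rightarrow> ('a \<Rightarrow> 'a \<Rightarrow> bool) \<Rightarrow> 'a \<Rightarrow> nat" where
  "vdeg V adj v = card {u \<in> V. adj v u}"

definition is_clique :: "'a set \<Rightarrow> ('a \<Rightarrow> 'a \<Rightarrow> bool) \<Rightarrow> 'a set \<Rightarrow> bool" where
  "is_clique V adj S \<longleftrightarrow> S \<subseteq> V \<and> (\<forall>u\<in>S. \<forall>v\<in>S. u \<noteq> v \<longrightarrow> adj u v)"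

definition cliques :: "'a set \<Rightarrow> ('a \<Rightarrow> 'a \<Rightarrow> bool) \<Rightarrow> nat \<Rightarrow> 'a set set" where
  "cliques V adj t = {S. is_clique V adj S \<and> finite S \<and> card S = t}"

definition cliques_in :: "'a set \<Rightarrow> ('a \<Rightarrow> 'a \<Rightarrow> bool) \<Rightarrow> nat \<Rightarrow> 'a set \<Rightarrow> 'a set set" where
  "cliques_in V adj t S = {e \<in> cliques V adj t. e \<subseteq> S}"

definition clique_deg :: "'a set \<Rightarrow> ('a \<Rightarrow> 'a \<Rightarrow> bool) \<Rightarrow> 'a set \<Rightarrow> nat" where
  "clique_deg V adj T = card {S \<in> cliques V adj (card T + 1). T \<subseteq> S}"

definition cD :: "'a set \<Rightarrow> ('a \<Rightarrow> 'a \<Rightarrow> bool) \<Rightarrow> 'a set \<Rightarrow> real" where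
  "cD V adj T = real (clique_deg V adj T) / real (card V)"

definition Dminus :: "real \<Rightarrow> 'a set \<Rightarrow> ('a \<Rightarrow> 'a \<Rightarrow> bool) \<Rightarrow> 'a set \<Rightarrow> real" where
  "Dminus \<beta> V adj T = min (cD V adj T) ((4 - real (card T)) * \<beta>)"

definition Dplus :: "real \<Rightarrow> 'a set \<Rightarrow> ('a \<Rightarrow> 'a \<Rightarrow> bool) \<Rightarrow> 'a set \<Rightarrow> real" where
  "Dplus \<beta> V adj T = cD V adj T - Dminus \<beta> V adj T"

definition heavy :: "real \<Rightarrow> 'a set \<Rightarrow> ('a \<Rightarrow> 'a \<Rightarrow> bool) \<Rightarrow> 'a set \<Rightarrow> bool" where
  "heavy \<beta> V adj T \<longleftrightarrow> Dplus \<beta> V adj T > 0"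

definition Dtilde :: "real \<Rightarrow> 'a set \<Rightarrow> ('a \<Rightarrow> 'a \<Rightarrow> bool) \<Rightarrow> 'a set \<Rightarrow> real" where
  "Dtilde \<beta> V adj T = (\<Sum>e\<in>cliques_in V adj 2 T. Dminus \<beta> V adj e) - (2 - 3 * \<beta> + Dminus \<beta> V adj T)"

end

theory Submission
  imports Defs
begin


lemma loss:
  fixes \<beta> y :: real
  assumes "0 < \<beta>" "\<beta> < 1/3"
  shows "(y - min y (2*\<beta>)) - (1-2*\<beta>) * ((y - min y (2*\<beta>)) / ((y - min y (2*\<beta>)) + \<beta>)) \<le> max 0 (y - (1-\<beta>))
       \<and> (y > 1-\<beta> \<longrightarrow> (y - min y (2*\<beta>)) - (1-2*\<beta>) * ((y - min y (2*\<beta>)) / ((y - min y (2*\<beta>)) + \<beta>)) < y - (1-\<beta>))"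
proof -
  define u where "u = y - min y (2*\<beta>)"
  have u0: "u \<ge> 0" unfolding u_def by simp
  define w where "w = u / (u + \<beta>)"
  have w0: "0 \<le> w" using u0 assms unfolding w_def by simp
  have w1: "w < 1" using u0 assms unfolding w_def by simp
  have uw: "u = w * (u + \<beta>)" using u0 assms unfolding w_def by simp
  have eq: "u - (1-2*\<beta>) * w = w * (u - (1 - 3*\<beta>))" using uw by (simp add: algebra_simps)
  have d: "u - (1 - 3*\<beta>) \<le> max 0 (y - (1-\<beta>))" unfolding u_def using assms by (auto simp: min_def max_def)
  have d2: "y > 1 - \<beta> \<Longrightarrow> u - (1 - 3*\<beta>) = y - (1-\<beta>)" unfolding u_def using assms by (auto simp: min_def)
  show ?thesis unfolding u_def[symmetric] w_def[symmetric] eq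
  proof
    show "w * (u - (1 - 3 * \<beta>)) \<le> max 0 (y - (1 - \<beta>))"
    proof (cases "u - (1 - 3*\<beta>) \<le> 0")
      case True then show ?thesis using w0 by (smt (verit) mult_nonneg_nonpos)
    next
      case False then have "w * (u - (1 - 3*\<beta>)) \<le> u - (1 - 3*\<beta>)" using w1 by (simp add: mult_left_le_one_le w0)
      then show ?thesis using d by linarith
    qed
    show "1 - \<beta> < y \<longrightarrow> w * (u - (1 - 3 * \<beta>)) < y - (1 - \<beta>)"
    proof
      assume h: "1 - \<beta> < y"
      then have p: "u - (1 - 3*\<beta>) > 0" using d2 by simp
      have "w * (u - (1 - 3*\<beta>)) < (u - (1 - 3*\<beta>))" using mult_strict_right_mono[OF w1 p] by simp
      then show "w * (u - (1 - 3 * \<beta>)) < y - (1 - \<beta>)" using d2[OF h] by linarith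
    qed
  qed
qed

lemma key:
  fixes \<beta> xa xb xc yab yac ybc t :: real
  assumes b1: "1/4 \<le> \<beta>" and b2: "\<beta> < 1/3" and ha: "xa \<ge> 1-\<beta>" and hb: "xb \<ge> 1-\<beta>" and hc: "xc \<ge> 1-\<beta>"
    and y1: "yab \<le> xa" and y2: "yac \<le> xc" and y3: "ybc \<le> xb" and ie: "yab+yac+ybc - t \<ge> xa+xb+xc-1"
  defines "L \<equiv> min yab (2*\<beta>) + min yac (2*\<beta>) + min ybc (2*\<beta>) - (2 - 3*\<beta> + min t \<beta>)"
    and "R \<equiv> (1 - 2/(29-75*\<beta>)) * ((4*\<beta>-1)/(1-2*\<beta>)) * (t - min t \<beta>)
       - (1-2*\<beta>)*( (yab - min yab (2*\<beta>))/((yab - min yab (2*\<beta>))+\<beta>)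
                   + (yac - min yac (2*\<beta>))/((yac - min yac (2*\<beta>))+\<beta>)
                   + (ybc - min ybc (2*\<beta>))/((ybc - min ybc (2*\<beta>))+\<beta>))"
  shows "R \<le> L \<and> (L = R \<longrightarrow> t - min t \<beta> \<le> 0 \<and> xa = 1-\<beta> \<and> xb = 1-\<beta> \<and> xc = 1-\<beta>)"
proof -
  define c where "c = (1 - 2/(29-75*\<beta>)) * ((4*\<beta>-1)/(1-2*\<beta>))"
  define P where "P = t - min t \<beta>"
  have P0: "P \<ge> 0" unfolding P_def by simp
  have k0: "0 < 1 - 2/(29-75*\<beta>)" and k1: "1 - 2/(29-75*\<beta>) \<le> 1" using b1 b2 by (auto simp: field_simps)
  have r0: "0 \<le> (4*\<beta>-1)/(1-2*\<beta>)" and r1: "(4*\<beta>-1)/(1-2*\<beta>) < 1" using b1 b2 by (auto simp: field_simps)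
  have c1: "c < 1" unfolding c_def using k0 k1 r0 r1
    using mult_left_le_one_le[OF r0 _ k1] k0 by linarith
  have "(1-c) * P \<ge> 0" using c1 P0 by simp
  then have cP: "c * P \<le> P" by (simp add: algebra_simps)
  have cP2: "P > 0 \<Longrightarrow> c * P < P" proof - assume "P > 0" then have "(1-c)*P > 0" using c1 by simp then show ?thesis by (simp add: algebra_simps) qed
  define f where "f y = (y - min y (2*\<beta>)) - (1-2*\<beta>) * ((y - min y (2*\<beta>)) / ((y - min y (2*\<beta>)) + \<beta>))" for y
  have bp: "0 < \<beta>" using b1 by simp
  note l = loss[OF bp b2, folded f_def]
  have eq: "L - R = (xa+xb+xc - 3*(1-\<beta>)) + (yab+yac+ybc - t - (xa+xb+xc-1)) + (P - c*P) - (f yab + f yac + f ybc)"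
    unfolding L_def R_def c_def P_def f_def by (simp add: algebra_simps)
  have la: "f yab \<le> max 0 (yab - (1-\<beta>))" "f yac \<le> max 0 (yac - (1-\<beta>))" "f ybc \<le> max 0 (ybc - (1-\<beta>))"
    using l by auto
  have ms: "max 0 (yab - (1-\<beta>)) \<le> xa - (1-\<beta>)" "max 0 (yac - (1-\<beta>)) \<le> xc - (1-\<beta>)" "max 0 (ybc - (1-\<beta>)) \<le> xb - (1-\<beta>)"
    using ha hb hc y1 y2 y3 by auto
  have "R \<le> L" using eq la ms cP ie by argo
  moreover have "L = R \<longrightarrow> P \<le> 0 \<and> xa = 1-\<beta> \<and> xb = 1-\<beta> \<and> xc = 1-\<beta>"
  proof
    assume LR: "L = R"
    have s1: "\<not> yab > 1-\<beta>"
    proof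
      assume "yab > 1-\<beta>" then have "f yab < yab - (1-\<beta>)" using l by blast
      then show False using eq la ms cP ie LR by (auto simp: max_def split: if_splits)
    qed
    have s2: "\<not> yac > 1-\<beta>"
    proof
      assume "yac > 1-\<beta>" then have "f yac < yac - (1-\<beta>)" using l by blast
      then show False using eq la ms cP ie LR by (auto simp: max_def split: if_splits)
    qed
    have s3: "\<not> ybc > 1-\<beta>"
    proof
      assume "ybc > 1-\<beta>" then have "f ybc < ybc - (1-\<beta>)" using l by blast
      then show False using eq la ms cP ie LR by (auto simp: max_def split: if_splits)
    qed
    have "f yab \<le> 0" "f yac \<le> 0" "f ybc \<le> 0" using la s1 s2 s3 by auto
    moreover have "\<not> P > 0" using cP2 eq calculation LR ie ha hb hc by fastforce
    ultimately show "P \<le> 0 \<and> xa = 1-\<beta> \<and> xb = 1-\<beta> \<and> xc = 1-\<beta>" using eq LR ie ha hb hc cP by auto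
  qed
  ultimately show ?thesis unfolding P_def by blast
qed



lemma cdeg:
  assumes G: "sgraph V adj" and K: "is_clique V adj K" and fK: "finite K"
  shows "clique_deg V adj K = card {w\<in>V. \<forall>u\<in>K. adj u w}"
proof -
  let ?W = "{w\<in>V. \<forall>u\<in>K. adj u w}"
  have irr: "\<And>v. \<not> adj v v" and sym: "\<And>u v. adj u v \<Longrightarrow> adj v u" and inV: "\<And>u v. adj u v \<Longrightarrow> u \<in> V \<and> v \<in> V"
    using G unfolding sgraph_def by auto
  have nK: "w \<notin> K" if "w \<in> ?W" for w using that irr by auto
  have inj: "inj_on (\<lambda>w. insert w K) ?W"
  proof (rule inj_onI)
    fix x y assume "x \<in> ?W" "y \<in> ?W" "insert x K = insert y K"
    then show "x = y" using nK by (metis insertE insertI1)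
  qed
  have img: "{S \<in> cliques V adj (card K + 1). K \<subseteq> S} = (\<lambda>w. insert w K) ` ?W"
  proof
    show "(\<lambda>w. insert w K) ` ?W \<subseteq> {S \<in> cliques V adj (card K + 1). K \<subseteq> S}"
    proof
      fix S assume "S \<in> (\<lambda>w. insert w K) ` ?W"
      then obtain w where w: "w \<in> ?W" and S: "S = insert w K" by auto
      have "is_clique V adj S" using K w S sym unfolding is_clique_def by auto
      moreover have "card S = card K + 1" using S nK[OF w] fK by simp
      ultimately show "S \<in> {S \<in> cliques V adj (card K + 1). K \<subseteq> S}" unfolding cliques_def using S fK by auto
    qed
    show "{S \<in> cliques V adj (card K + 1). K \<subseteq> S} \<subseteq> (\<lambda>w. insert w K) ` ?W"
    proof
      fix S assume "S \<in> {S \<in> cliques V adj (card K + 1). K \<subseteq> S}"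
      then have cS: "is_clique V adj S" and fS: "finite S" and crd: "card S = card K + 1" and KS: "K \<subseteq> S"
        unfolding cliques_def by auto
      have "card (S - K) = 1" using crd KS fK by (simp add: card_Diff_subset)
      then obtain w where w: "S - K = {w}" by (auto simp: card_Suc_eq)
      have SS: "S = insert w K" using w KS by auto
      have "w \<in> ?W" using cS SS nK w unfolding is_clique_def by auto
      then show "S \<in> (\<lambda>w. insert w K) ` ?W" using SS by auto
    qed
  qed
  show ?thesis unfolding clique_deg_def img using card_image[OF inj] by simp
qed

lemma card_ind:
  assumes "finite V"
  shows "real (card {w\<in>V. P w}) = (\<Sum>w\<in>V. if P w then 1 else 0)"
  using assms by (simp add: sum.inter_filter[symmetric])

lemma ie3:
  assumes fV: "finite V"
  shows "real (card {w\<in>V. A w}) + real (card {w\<in>V. B w}) + real (card {w\<in>V. C w})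
     \<le> real (card V) + real (card {w\<in>V. A w \<and> B w}) + real (card {w\<in>V. A w \<and> C w}) + real (card {w\<in>V. B w \<and> C w})
        - real (card {w\<in>V. A w \<and> B w \<and> C w})"
proof -
  have "(\<Sum>w\<in>V. (if A w then 1 else 0) + (if B w then 1 else 0) + (if C w then 1 else 0) :: real)
     \<le> (\<Sum>w\<in>V. 1 + (if A w \<and> B w then 1 else 0) + (if A w \<and> C w then 1 else 0) + (if B w \<and> C w then 1 else 0)
           - (if A w \<and> B w \<and> C w then 1 else 0))"
    by (rule sum_mono) auto
  then show ?thesis using fV by (simp add: card_ind sum.distrib sum_subtractf)
qed



theorem mainTheorem14:
  fixes V :: "'a set" and adj :: "'a \<Rightarrow> 'a \<Rightarrow> bool" and \<beta> :: real and T :: "'a set"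
  assumes G: "sgraph V adj"
    and b1: "1/4 \<le> \<beta>" and b2: "\<beta> < 1/3"
    and mindeg: "\<forall>v\<in>V. real (vdeg V adj v) \<ge> (1 - \<beta>) * real (card V)"
    and mindeg_att: "\<exists>v\<in>V. real (vdeg V adj v) = (1 - \<beta>) * real (card V)"
    and T: "T \<in> cliques V adj 3"
  shows "Dtilde \<beta> V adj T \<ge>
           (1 - 2 / (29 - 75 * \<beta>)) * ((4 * \<beta> - 1) / (1 - 2 * \<beta>)) * Dplus \<beta> V adj T
           - (1 - 2 * \<beta>) * (\<Sum>e\<in>cliques_in V adj 2 T. Dplus \<beta> V adj e / (Dplus \<beta> V adj e + \<beta>))
       \<and> (Dtilde \<beta> V adj T =
           (1 - 2 / (29 - 75 * \<beta>)) * ((4 * \<beta> - 1) / (1 - 2 * \<beta>)) * Dplus \<beta> V adj T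
           - (1 - 2 * \<beta>) * (\<Sum>e\<in>cliques_in V adj 2 T. Dplus \<beta> V adj e / (Dplus \<beta> V adj e + \<beta>))
          \<longrightarrow> \<not> heavy \<beta> V adj T \<and> (\<forall>v\<in>T. real (vdeg V adj v) = (1 - \<beta>) * real (card V)))"
proof -
  have fV: "finite V" using G unfolding sgraph_def by auto
  have cT: "is_clique V adj T" and fT: "finite T" and c3: "card T = 3" using T unfolding cliques_def by auto
  obtain a b c where abc: "T = {a,b,c}" and ab: "a \<noteq> b" and bc: "b \<noteq> c" and ac: "a \<noteq> c"
    using c3 by (auto simp: card_3_iff)
  have inV: "a \<in> V" "b \<in> V" "c \<in> V" using cT abc unfolding is_clique_def by auto
  have adjs: "adj a b" "adj a c" "adj b c" using cT abc ab bc ac unfolding is_clique_def by auto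
  have sym: "\<And>u v. adj u v \<Longrightarrow> adj v u" using G unfolding sgraph_def by auto
  have n0: "real (card V) > 0" using inV fV card_gt_0_iff by fastforce
  define n where "n = real (card V)"
  have ci: "cliques_in V adj 2 T = {{a,b},{a,c},{b,c}}"
  proof
    show "cliques_in V adj 2 T \<subseteq> {{a,b},{a,c},{b,c}}"
    proof
      fix e assume "e \<in> cliques_in V adj 2 T"
      then have "card e = 2" "e \<subseteq> {a,b,c}" unfolding cliques_in_def cliques_def abc by auto
      then obtain x y where "e = {x,y}" "x \<noteq> y" "x \<in> {a,b,c}" "y \<in> {a,b,c}" by (auto simp: card_2_iff)
      then show "e \<in> {{a,b},{a,c},{b,c}}" by auto
    qed
    show "{{a,b},{a,c},{b,c}} \<subseteq> cliques_in V adj 2 T"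
      using inV adjs sym ab bc ac unfolding cliques_in_def cliques_def is_clique_def abc by auto
  qed
  have cl2: "\<And>x y. x \<in> V \<Longrightarrow> y \<in> V \<Longrightarrow> adj x y \<Longrightarrow> is_clique V adj {x,y}"
    using sym unfolding is_clique_def by auto
  have cdE: "cD V adj {x,y} = real (card {w\<in>V. adj x w \<and> adj y w}) / n"
    if "x \<in> V" "y \<in> V" "adj x y" for x y
    using cdeg[OF G cl2[OF that]] unfolding cD_def n_def by simp
  have cdT: "cD V adj T = real (card {w\<in>V. adj a w \<and> adj b w \<and> adj c w}) / n"
    using cdeg[OF G cT fT] unfolding cD_def n_def abc by simp
  have c2: "\<And>x y. x \<noteq> y \<Longrightarrow> real (card {x,y}) = 2" by simp
  have sumeq: "(\<Sum>e\<in>cliques_in V adj 2 T. h e) = h {a,b} + h {a,c} + h {b,c}" for h :: "'a set \<Rightarrow> real"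
    unfolding ci using ab bc ac by (simp add: doubleton_eq_iff)
  define xa where "xa = real (vdeg V adj a) / n"
  define xb where "xb = real (vdeg V adj b) / n"
  define xc where "xc = real (vdeg V adj c) / n"
  define yab where "yab = real (card {w\<in>V. adj a w \<and> adj b w}) / n"
  define yac where "yac = real (card {w\<in>V. adj a w \<and> adj c w}) / n"
  define ybc where "ybc = real (card {w\<in>V. adj b w \<and> adj c w}) / n"
  define t where "t = real (card {w\<in>V. adj a w \<and> adj b w \<and> adj c w}) / n"
  have DmE: "Dminus \<beta> V adj {a,b} = min yab (2*\<beta>)" "Dminus \<beta> V adj {a,c} = min yac (2*\<beta>)" "Dminus \<beta> V adj {b,c} = min ybc (2*\<beta>)"
    unfolding Dminus_def using cdE inV adjs ab bc ac yab_def yac_def ybc_def by auto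
  have DpE: "Dplus \<beta> V adj {a,b} = yab - min yab (2*\<beta>)" "Dplus \<beta> V adj {a,c} = yac - min yac (2*\<beta>)" "Dplus \<beta> V adj {b,c} = ybc - min ybc (2*\<beta>)"
    unfolding Dplus_def DmE using cdE inV adjs yab_def yac_def ybc_def by auto
  have DmT: "Dminus \<beta> V adj T = min t \<beta>" unfolding Dminus_def cdT c3 t_def by simp
  have DpT: "Dplus \<beta> V adj T = t - min t \<beta>" unfolding Dplus_def DmT cdT t_def by simp
  have hx: "xa \<ge> 1-\<beta>" "xb \<ge> 1-\<beta>" "xc \<ge> 1-\<beta>"
    using mindeg inV n0 unfolding xa_def xb_def xc_def n_def by (auto simp: field_simps)
  have sub: "card {w\<in>V. adj a w \<and> adj b w} \<le> vdeg V adj a" "card {w\<in>V. adj a w \<and> adj c w} \<le> vdeg V adj c"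
     "card {w\<in>V. adj b w \<and> adj c w} \<le> vdeg V adj b"
    unfolding vdeg_def using fV by (auto intro: card_mono)
  have hy: "yab \<le> xa" "yac \<le> xc" "ybc \<le> xb"
    unfolding yab_def yac_def ybc_def xa_def xb_def xc_def using sub n0 n_def
    by (auto simp: divide_right_mono)
  have hie: "yab+yac+ybc - t \<ge> xa+xb+xc-1"
  proof -
    have "real (vdeg V adj a) + real (vdeg V adj b) + real (vdeg V adj c) - n \<le>
          real (card {w\<in>V. adj a w \<and> adj b w}) + real (card {w\<in>V. adj a w \<and> adj c w}) + real (card {w\<in>V. adj b w \<and> adj c w})
          - real (card {w\<in>V. adj a w \<and> adj b w \<and> adj c w})"
      using ie3[OF fV, of "adj a" "adj b" "adj c"] unfolding vdeg_def n_def by linarith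
    then have "(real (vdeg V adj a) + real (vdeg V adj b) + real (vdeg V adj c) - n) / n \<le>
          (real (card {w\<in>V. adj a w \<and> adj b w}) + real (card {w\<in>V. adj a w \<and> adj c w}) + real (card {w\<in>V. adj b w \<and> adj c w})
          - real (card {w\<in>V. adj a w \<and> adj b w \<and> adj c w})) / n" using n0 n_def by (simp add: divide_right_mono)
    then show ?thesis unfolding xa_def xb_def xc_def yab_def yac_def ybc_def t_def using n0 n_def
      by (simp add: diff_divide_distrib add_divide_distrib)
  qed
  note K = key[OF b1 b2 hx(1) hx(2) hx(3) hy hie]
  have degs: "\<forall>v\<in>T. real (vdeg V adj v) = (1 - \<beta>) * real (card V)"
    if "xa = 1-\<beta>" "xb = 1-\<beta>" "xc = 1-\<beta>"
    using that n0 unfolding abc xa_def xb_def xc_def n_def by (auto simp: field_simps)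
  show ?thesis
    unfolding Dtilde_def heavy_def sumeq DmE DpE DmT DpT not_less using K degs by blast
qed

end
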